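(* Let $T:[0,1]\to\mathbb{R}$ be Takagi's function, $T(x)=\sum_{n=1}^\infty 2^{-n}\phi^{(n)}(x)$, where $\phi(x)=2x$ for $0\le x\le 1/2$, $\phi(x)=2-2x$ for $1/2\le x\le 1$, and $\phi^{(n)}$ denotes the $n$-fold composition of $\phi$. Let $x\in(0,1)$ be non-dyadic (i.e. not of the form $k/2^m$ with integers $k,m$), and write $$x=\sum_{n=1}^\infty 2^{-a_n},\qquad 1-x=\sum_{n=1}^\infty 2^{-b_n},$$ where $\{a_n\}$ and $\{b_n\}$ are strictly increasing sequences of positive integers (uniquely determined by $x$). Then: (i) $T'_+(x)=+\infty$ if and only if $a_n-2n\to\infty$; (ii) $T'_-(x)=+\infty$ if and only if $a_{n+1}-2a_n+2n-\log_2(a_{n+1}-a_n)\to-\infty$ as $n\to\infty$; (iii) $T'_+(x)=-\infty$ if and only if $b_{n+1}-2b_n+2n-\log_2(b_{n+1}-b_n)\to-\infty$ as $n\to\infty$; (iv) $T'_-(x)=-\infty$ if and only if $b_n-2n\to\infty$.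
   Context: $T'_+(x):=\lim_{h\downarrow 0}\frac{T(x+h)-T(x)}{h}$ and $T'_-(x):=\lim_{h\uparrow 0}\frac{T(x+h)-T(x)}{h}$, whenever these limits exist as extended real numbers. Thus $a_n$ are the positions of the ones and $b_n$ the positions of the zeros in the binary expansion of $x$. *)

theory Defs
  imports "HOL-Analysis.Analysis"
begin

definition tent :: "real \<Rightarrow> real" where
  "tent x = (if x \<le> 1/2 then 2 * x else 2 - 2 * x)"

definition takagi :: "real \<Rightarrow> real" where
  "takagi x = (\<Sum>n. (1/2) ^ (Suc n) * (tent ^^ (Suc n)) x)"

definition dyadic :: "real \<Rightarrow> bool" where
  "dyadic x \<longleftrightarrow> (\<exists>(k::int) (m::nat). x = of_int k / 2 ^ m)"

end

theory Submission
  imports Defs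
begin


lemma tent_01: "0 \<le> y \<Longrightarrow> y \<le> 1 \<Longrightarrow> 0 \<le> tent y \<and> tent y \<le> 1"
  by (auto simp: tent_def)

lemma tentpow_01: "0 \<le> y \<Longrightarrow> y \<le> 1 \<Longrightarrow> 0 \<le> (tent^^n) y \<and> (tent^^n) y \<le> 1"
  by (induction n) (auto simp: tent_01)

lemma takagi_summable: assumes "0 \<le> y" "y \<le> 1"
  shows "summable (\<lambda>n. (1/2) ^ (Suc n) * (tent ^^ (Suc n)) y)"
proof (rule summable_comparison_test[of _ "\<lambda>n. (1/2::real) ^ Suc n"])
  show "\<exists>N. \<forall>n\<ge>N. norm ((1/2) ^ (Suc n) * (tent ^^ (Suc n)) y) \<le> (1/2::real) ^ Suc n"
    using tentpow_01[OF assms, of "Suc _"] by (auto intro!: mult_left_le_one_le simp: abs_mult simp del: funpow.simps)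
  show "summable (\<lambda>n. (1/2::real) ^ Suc n)" by (simp add: summable_geometric)
qed

lemma takagi_step: assumes "0 \<le> y" "y \<le> 1"
  shows "takagi y = tent y / 2 + takagi (tent y) / 2"
proof -
  have s: "summable (\<lambda>n. (1/2) ^ (Suc n) * (tent ^^ (Suc n)) y)" by (rule takagi_summable[OF assms])
  have "takagi y = (\<Sum>n. (1/2) ^ (Suc (Suc n)) * (tent ^^ (Suc (Suc n))) y) + (1/2) * tent y"
    unfolding takagi_def using suminf_split_head[OF s] by (simp add: suminf_split_head[OF s])
  also have "(\<Sum>n. (1/2) ^ (Suc (Suc n)) * (tent ^^ (Suc (Suc n))) y) = (\<Sum>n. (1/2) * ((1/2) ^ (Suc n) * (tent ^^ (Suc n)) (tent y)))"
    by (simp add: funpow_Suc_right del: funpow.simps)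
  also have "\<dots> = (1/2) * takagi (tent y)"
    unfolding takagi_def by (rule suminf_mult) (rule takagi_summable, use tent_01[OF assms] in auto)
  finally show ?thesis by simp
qed

lemma takagi_nonneg: "0 \<le> y \<Longrightarrow> y \<le> 1 \<Longrightarrow> 0 \<le> takagi y"
  unfolding takagi_def
  by (rule suminf_nonneg[OF takagi_summable]) (auto simp: tentpow_01 simp del: funpow.simps)

lemma takagi_le1: assumes "0 \<le> y" "y \<le> 1" shows "takagi y \<le> 1"
proof -
  have "takagi y \<le> (\<Sum>n. (1/2::real) ^ Suc n)"
    unfolding takagi_def
    by (rule suminf_le[OF _ takagi_summable[OF assms]]) (auto intro!: mult_left_le_one_le simp: tentpow_01[OF assms] summable_geometric simp del: funpow.simps)
  also have "(\<Sum>n. (1/2::real) ^ Suc n) = 1"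
    using suminf_geometric[of "1/2::real"] suminf_mult[of "\<lambda>n. (1/2::real)^n" "1/2"] by (simp add: summable_geometric)
  finally show ?thesis .
qed

lemma tent_sym: "tent (1 - y) = tent y"
  by (auto simp: tent_def)

lemma takagi_sym: "0 \<le> y \<Longrightarrow> y \<le> 1 \<Longrightarrow> takagi (1 - y) = takagi y"
  using takagi_step[of y] takagi_step[of "1-y"] by (simp add: tent_sym)

lemma takagi_0[simp]: "takagi 0 = 0"
proof -
  have "(tent ^^ n) 0 = 0" for n by (induction n) (auto simp: tent_def)
  thus ?thesis by (simp add: takagi_def del: funpow.simps)
qed

lemma takagi_1[simp]: "takagi 1 = 0"
  using takagi_sym[of 0] by simp

lemma takagi_half: "takagi (1/2) = 1/2"
  using takagi_step[of "1/2"] by (simp add: tent_def)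

lemma takagi_left: "0 \<le> z \<Longrightarrow> z \<le> 1/2 \<Longrightarrow> takagi z = z + takagi (2*z) / 2"
  using takagi_step[of z] by (simp add: tent_def)

lemma takagi_right: assumes "1/2 \<le> z" "z \<le> 1" shows "takagi z = 1 - z + takagi (2*z - 1) / 2"
proof -
  have "takagi z = (2 - 2*z)/2 + takagi (2 - 2*z) / 2"
  proof (cases "z = 1/2")
    case True thus ?thesis using takagi_half by (simp add: True)
  next
    case False thus ?thesis using takagi_step[of z] assms by (auto simp: tent_def)
  qed
  also have "takagi (2 - 2*z) = takagi (2*z - 1)"
    using takagi_sym[of "2*z - 1"] assms by simp
  finally show ?thesis by simp
qed



lemma scale_le1: "(0::real) < c \<Longrightarrow> a \<le> c*y \<Longrightarrow> a/c \<le> y"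
  by (simp add: pos_divide_le_eq mult.commute)
lemma scale_le2: "(0::real) < c \<Longrightarrow> c*y \<le> b \<Longrightarrow> y \<le> b/c"
  by (simp add: pos_le_divide_eq mult.commute)

lemma aux_even: "(0::real) < c \<Longrightarrow> ((c*y - a) + W/2)/c = y - a/c + W/(2*c)"
  by (simp add: field_simps)
lemma aux_odd: "(0::real) < c \<Longrightarrow> (1 - (c*y - a) + W/2)/c = (1 + a)/c - y + W/(2*c)"
  by (simp add: field_simps)

lemma selfsim_ex: "\<forall>k::nat. k < 2^m \<longrightarrow> (\<exists>\<alpha> \<beta>. \<forall>y. real k/2^m \<le> y \<longrightarrow> y \<le> (real k+1)/2^m \<longrightarrow>
     takagi y = \<alpha> + \<beta>*y + takagi(2^m*y - k)/2^m)"
proof (induction m)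
  case 0
  show ?case by (auto intro!: exI[of _ 0])
next
  case (Suc m)
  show ?case
  proof (intro allI impI)
    fix k :: nat assume k: "k < 2^Suc m"
    define k' where "k' = k div 2"
    have k': "k' < 2^m" using k by (simp add: k'_def less_mult_imp_div_less)
    obtain \<alpha> \<beta> where ab: "\<And>y. real k'/2^m \<le> y \<Longrightarrow> y \<le> (real k'+1)/2^m \<Longrightarrow>
       takagi y = \<alpha> + \<beta>*y + takagi(2^m*y - k')/2^m" using Suc k' by blast
    have p: "(0::real) < 2^m" by simp
    have P2: "(2::real)^Suc m = 2 * 2^m" by simp
    show "\<exists>\<alpha> \<beta>. \<forall>y. real k/2^Suc m \<le> y \<longrightarrow> y \<le> (real k+1)/2^Suc m \<longrightarrow>
     takagi y = \<alpha> + \<beta>*y + takagi(2^Suc m*y - k)/2^Suc m"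
    proof (cases "even k")
      case True
      have "k = 2*k'" using True unfolding k'_def by simp
      hence kk: "real k = 2 * real k'" by simp
      show ?thesis
      proof (intro exI allI impI)
        fix y assume y: "real k/2^Suc m \<le> y" "y \<le> (real k+1)/2^Suc m"
        have y2: "real k' \<le> 2^m*y" "2^m*y \<le> real k' + 1/2"
          using y p unfolding P2 kk by (auto simp: divide_simps algebra_simps)
        have y1: "real k'/2^m \<le> y" "y \<le> (real k'+1)/2^m" "0 \<le> 2^m*y - k'" "2^m*y - k' \<le> 1/2"
          using y2 p scale_le1[OF p, of "real k'" y] scale_le2[OF p, of y "real k'+1"] by auto
        have "takagi y = \<alpha> + \<beta>*y + takagi(2^m*y - k')/2^m" using ab[OF y1(1,2)] .
        also have "takagi(2^m*y - k') = (2^m*y - k') + takagi (2*(2^m*y - k'))/2"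
          using takagi_left y1 by simp
        also have "2*(2^m*y - k') = 2^Suc m*y - k" by (simp add: kk)
        finally show "takagi y = (\<alpha> - k'/2^m) + (\<beta>+1)*y + takagi(2^Suc m*y - k)/2^Suc m"
          unfolding P2 aux_even[OF p] by (simp add: distrib_right)
      qed
    next
      case False
      have "k = 2*k' + 1" using False unfolding k'_def by simp
      hence kk: "real k = 2 * real k' + 1" by simp
      show ?thesis
      proof (intro exI allI impI)
        fix y assume y: "real k/2^Suc m \<le> y" "y \<le> (real k+1)/2^Suc m"
        have y2: "real k' + 1/2 \<le> 2^m*y" "2^m*y \<le> real k' + 1"
          using y p unfolding P2 kk by (auto simp: divide_simps algebra_simps)
        have y1: "real k'/2^m \<le> y" "y \<le> (real k'+1)/2^m" "1/2 \<le> 2^m*y - k'" "2^m*y - k' \<le> 1"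
          using y2 p scale_le1[OF p, of "real k'" y] scale_le2[OF p, of y "real k'+1"] by auto
        have "takagi y = \<alpha> + \<beta>*y + takagi(2^m*y - k')/2^m" using ab[OF y1(1,2)] .
        also have "takagi(2^m*y - k') = 1 - (2^m*y - k') + takagi (2*(2^m*y - k') - 1)/2"
          using takagi_right y1 by simp
        also have "2*(2^m*y - k') - 1 = 2^Suc m*y - k" by (simp add: kk)
        finally show "takagi y = (\<alpha> + (1 + k')/2^m) + (\<beta> - 1)*y + takagi(2^Suc m*y - k)/2^Suc m"
          unfolding P2 aux_odd[OF p] by (simp add: left_diff_distrib)
      qed
    qed
  qed
qed


definition sl :: "nat \<Rightarrow> nat \<Rightarrow> real" where
  "sl m k = 2^m * (takagi ((real k + 1)/2^m) - takagi (real k/2^m))"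

lemma selfsim:
  assumes "k < 2^m" "real k/2^m \<le> y" "y \<le> (real k+1)/2^m"
  shows "takagi y = takagi (real k/2^m) + sl m k * (y - real k/2^m) + takagi(2^m*y - k)/2^m"
proof -
  obtain \<alpha> \<beta> where ab: "\<And>y. real k/2^m \<le> y \<Longrightarrow> y \<le> (real k+1)/2^m \<Longrightarrow>
       takagi y = \<alpha> + \<beta>*y + takagi(2^m*y - k)/2^m" using selfsim_ex assms(1) by blast
  have p: "(0::real) < 2^m" by simp
  have q1: "2^m * (real k/2^m) = real k" "2^m*((real k+1)/2^m) = real k + 1" using p by simp_all
  have le: "real k/2^m \<le> (real k+1)/2^m" using p by (simp add: divide_right_mono)
  have e1: "takagi (real k/2^m) = \<alpha> + \<beta>*(real k/2^m)" using ab[of "real k/2^m"] le q1 by simp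
  have e2: "takagi ((real k+1)/2^m) = \<alpha> + \<beta>*((real k+1)/2^m)"
    using ab[of "(real k+1)/2^m"] le q1 by simp
  have "takagi ((real k+1)/2^m) - takagi (real k/2^m) = \<beta>*(1/2^m)"
    unfolding e1 e2 by (simp add: add_divide_distrib ring_distribs)
  hence "sl m k = \<beta>" unfolding sl_def using p by simp
  thus ?thesis using ab[OF assms(2,3)] e1 by (simp add: right_diff_distrib)
qed



lemma ar1: "(0::real)<c \<Longrightarrow> 2*c*(A + s/(2*c) + 1/(2*c) - A) = s + 1" by (simp add: field_simps)
lemma ar2: "(0::real)<c \<Longrightarrow> 2*c*(A + s/c - (A + s/(2*c) + 1/(2*c))) = s - 1" by (simp add: field_simps)
lemma ar3: "(0::real)<c \<Longrightarrow> k/c \<le> (2*k+1)/(2*c) \<and> (2*k+1)/(2*c) \<le> (k+1)/c \<and> c*((2*k+1)/(2*c)) - k = 1/2 \<and> (2*k+1)/(2*c) - k/c = 1/(2*c)"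
  by (simp add: field_simps)
lemma ar4: "(0::real)<c \<Longrightarrow> (2*k+1+1)/(2*c) = (k+1)/c" by (simp add: field_simps)
lemma ar5: "(0::real)<c \<Longrightarrow> (2*k)/(2*c) = k/c" by (simp add: field_simps)

lemma sl_children:
  assumes "k < 2^m"
  shows "sl (Suc m) (2*k) = sl m k + 1" "sl (Suc m) (2*k+1) = sl m k - 1"
proof -
  define c :: real where "c = 2^m"
  have c: "0 < c" "(2::real)^Suc m = 2*c" "(2::real)^m = c" by (simp_all add: c_def)
  define M where "M = (2 * real k + 1) / (2*c)"
  note A3 = ar3[OF c(1), of "real k", folded M_def]
  have TM: "takagi M = takagi (real k/c) + sl m k / (2*c) + 1/(2*c)"
    using selfsim[OF assms, of M] A3 takagi_half unfolding c by simp
  have TR: "takagi ((real k+1)/c) = takagi (real k/c) + sl m k / c"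
    using c by (simp add: sl_def)
  have e: "real (2*k) = 2 * real k" "real (2*k+1) = 2*real k + 1" by simp_all
  show "sl (Suc m) (2*k) = sl m k + 1"
    unfolding sl_def[of "Suc m"] c e ar5[OF c(1)] M_def[symmetric] TM ar1[OF c(1)] ..
  show "sl (Suc m) (2*k+1) = sl m k - 1"
    unfolding sl_def[of "Suc m"] c e ar4[OF c(1)] M_def[symmetric] TM TR ar2[OF c(1)] ..
qed

lemma takagi_small: "0 \<le> t \<Longrightarrow> t \<le> (1/2)^k \<Longrightarrow> takagi t = k*t + takagi(2^k*t)/2^k"
proof (induction k arbitrary: t)
  case 0 thus ?case by simp
next
  case (Suc k)
  have "(1/2::real)^Suc k \<le> 1/2" by (simp add: power_le_one)
  hence h: "t \<le> 1/2" using Suc.prems(2) by linarith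
  have "takagi t = t + takagi (2*t)/2" using takagi_left Suc.prems h by simp
  also have "takagi (2*t) = k*(2*t) + takagi(2^k*(2*t))/2^k"
    using Suc.IH[of "2*t"] Suc.prems by simp
  also have "2^k*(2*t) = 2^Suc k * t" by simp
  finally show ?case by (simp add: algebra_simps)
qed

lemma takagi_small_bounds:
  assumes "0 \<le> t" "t \<le> (1/2)^k"
  shows "k*t \<le> takagi t" "takagi t \<le> k*t + (1/2)^k"
proof -
  have p: "(0::real) < 2^k" by simp
  have "2^k*t \<le> 2^k * (1/2)^k" using assms(2) p by (intro mult_left_mono) auto
  also have "(2::real)^k * (1/2)^k = 1" by (simp add: power_one_over)
  finally have i: "0 \<le> 2^k*t" "2^k*t \<le> 1" using assms p by auto
  show "k*t \<le> takagi t" using takagi_small[OF assms] takagi_nonneg[OF i] by simp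
  have "takagi(2^k*t)/2^k \<le> 1/2^k" using takagi_le1[OF i] p by (simp add: divide_right_mono)
  thus "takagi t \<le> k*t + (1/2)^k" using takagi_small[OF assms] by (simp add: power_one_over)
qed



locale tk =
  fixes x :: real and a :: "nat \<Rightarrow> nat"
  assumes x0: "0 < x" and x1: "x < 1" and nd: "\<not> dyadic x"
    and apos: "a 1 \<ge> 1" and amono: "\<And>n. n \<ge> 1 \<Longrightarrow> a n < a (Suc n)"
    and asum: "(\<lambda>n. (1/2) ^ a (Suc n)) sums x"
begin

definition A where "A n = (if n = 0 then 0 else a n)"
definition P where "P n = (\<Sum>i<n. (1/2::real) ^ a (Suc i))"

lemma A_Suc: "A (Suc n) = a (Suc n)" by (simp add: A_def)
lemma A_0: "A 0 = 0" by (simp add: A_def)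

lemma A_mono: "A n < A (Suc n)"
  using apos amono[of n] by (cases n) (auto simp: A_def)

lemma A_strict: "strict_mono A"
  by (rule strict_monoI_Suc) (rule A_mono)

lemma A_add: "A n + i \<le> A (n + i)"
proof (induction i)
  case (Suc i) thus ?case using A_mono[of "n+i"] by simp
qed simp

lemma A_ge: "n \<le> A n" using A_add[of 0 n] by (simp add: A_0)

lemma tail_sums: "(\<lambda>i. (1/2::real) ^ a (Suc (i + n))) sums (x - P n)"
  using sums_split_initial_segment[OF asum, of n] by (simp add: P_def)

lemma tail_ge: "(1/2)^A(Suc n) \<le> x - P n"
proof -
  have "(\<Sum>i<1. (1/2::real) ^ a (Suc (i + n))) \<le> (\<Sum>i. (1/2::real) ^ a (Suc (i + n)))"
    by (rule sum_le_suminf) (use tail_sums in \<open>auto simp: sums_iff\<close>)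
  thus ?thesis using tail_sums by (simp add: sums_iff A_Suc)
qed

lemma tail_pos: "P n < x"
  using tail_ge[of n] by (smt (verit) zero_less_power zero_less_divide_1_iff)

lemma tail_le: "x - P n \<le> 2*(1/2)^A(Suc n)"
proof -
  have g: "(\<lambda>i. (1/2::real)^A(Suc n) * (1/2)^i) sums ((1/2)^A(Suc n) * 2)"
    using sums_mult[OF geometric_sums[of "1/2::real"], of "(1/2)^A(Suc n)"] by simp
  have "(1/2::real) ^ a (Suc (i + n)) \<le> (1/2)^A(Suc n) * (1/2)^i" for i
  proof -
    have "A (Suc n) + i \<le> a (Suc (i + n))" using A_add[of "Suc n" i] by (simp add: A_Suc add.commute)
    hence "(1/2::real) ^ a (Suc (i + n)) \<le> (1/2)^(A(Suc n) + i)" by (rule power_decreasing) auto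
    thus ?thesis by (simp add: power_add)
  qed
  from sums_le[OF this tail_sums g] show ?thesis by simp
qed

lemma P_dyadic: "A n \<le> j \<Longrightarrow> \<exists>N::nat. P n = real N / 2^j"
proof (induction n)
  case 0 show ?case by (auto simp: P_def intro!: exI[of _ 0])
next
  case (Suc n)
  have j: "a (Suc n) \<le> j" using Suc.prems by (simp add: A_Suc)
  obtain N where N: "P n = real N / 2^j" using Suc.IH Suc.prems A_mono[of n] by force
  have "(1/2::real)^a(Suc n) = 2^(j - a (Suc n)) / 2^j"
    using j by (simp add: power_one_over power_diff)
  hence "P (Suc n) = real (N + 2^(j - a (Suc n))) / 2^j"
    using N by (simp add: P_def add_divide_distrib)
  thus ?case by blast
qed

lemma tail_lt: "x - P n < 2*(1/2)^A(Suc n)"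
proof (rule ccontr)
  assume "\<not> ?thesis"
  hence e: "x = P n + 2*(1/2)^A(Suc n)" using tail_le[of n] by simp
  obtain N where N: "P n = real N / 2^A(Suc n)" using P_dyadic[of n "A (Suc n)"] A_mono[of n] by force
  have "x = real (N+2) / 2^A(Suc n)" unfolding e N by (simp add: power_one_over add_divide_distrib)
  hence "dyadic x" unfolding dyadic_def by (metis of_int_of_nat_eq)
  thus False using nd by simp
qed

end


context tk begin

lemma solve_c: "(0::real) < c \<Longrightarrow> c*x = z \<Longrightarrow> x = z/c" by (simp add: field_simps)

definition K where "K j = nat \<lfloor>2^j * x\<rfloor>"
definition s where "s j = sl j (K j)"

lemma K_bounds: "real (K j) < 2^j * x" "2^j*x < real (K j) + 1" "K j < 2^j"
proof -
  have z: "0 \<le> 2^j * x" using x0 by simp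
  have rk: "real (K j) = of_int \<lfloor>2^j * x\<rfloor>" unfolding K_def using z by simp
  have le: "real (K j) \<le> 2^j * x" "2^j*x < real (K j) + 1" unfolding rk by linarith+
  show "2^j*x < real (K j) + 1" by (rule le(2))
  show lt: "real (K j) < 2^j * x"
  proof (rule ccontr)
    assume "\<not> ?thesis"
    hence "real (K j) = 2^j * x" using le(1) by linarith
    hence "2^j * x = of_int \<lfloor>2^j * x\<rfloor>" using rk by linarith
    hence "x = of_int \<lfloor>2^j * x\<rfloor> / 2^j" by (intro solve_c) auto
    hence "dyadic x" unfolding dyadic_def by blast
    thus False using nd by simp
  qed
  have "2^j * x < (2::real)^j" using x1 by simp
  hence "real (K j) < 2^j" using lt by linarith
  thus "K j < 2^j" by (metis of_nat_less_iff of_nat_numeral of_nat_power)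
qed

lemma K_Suc: "K (Suc j) = 2 * K j \<or> K (Suc j) = 2 * K j + 1"
proof -
  have b1: "real (K (Suc j)) < 2 * (2^j * x)" "2 * (2^j*x) < real (K (Suc j)) + 1"
    using K_bounds[of "Suc j"] by (simp_all add: mult.assoc)
  have b2: "2 * real (K j) < 2 * (2^j * x)" "2 * (2^j*x) < 2 * real (K j) + 2"
    using K_bounds[of j] by simp_all
  have "real (K (Suc j)) < real (2 * K j + 2)" "real (2 * K j) < real (K (Suc j) + 1)"
    using b1 b2 by simp_all
  hence "K (Suc j) < 2 * K j + 2" "2 * K j < K (Suc j) + 1" by (simp_all only: of_nat_less_iff)
  thus ?thesis by linarith
qed

lemma s_Suc: "K (Suc j) = 2 * K j \<Longrightarrow> s (Suc j) = s j + 1"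
             "K (Suc j) = 2 * K j + 1 \<Longrightarrow> s (Suc j) = s j - 1"
  unfolding s_def using sl_children[OF K_bounds(3)[of j]] by simp_all

lemma K_link: assumes "A n \<le> j" "j < A (Suc n)" shows "real (K j) = 2^j * P n"
proof -
  obtain N where N: "P n = real N / 2^j" using P_dyadic assms(1) by blast
  have p: "(0::real) < 2^j" by simp
  have "2 * (1/2::real)^A(Suc n) \<le> (1/2)^j"
  proof -
    have "(1/2::real)^A(Suc n) \<le> (1/2)^(Suc j)" using assms(2) by (intro power_decreasing) auto
    thus ?thesis by simp
  qed
  hence t: "P n < x" "x < P n + (1/2)^j" using tail_pos[of n] tail_lt[of n] by linarith+
  have "2^j * x < 2^j * (P n + (1/2)^j)" using t(2) p by (intro mult_strict_left_mono) auto
  also have "2^j * (P n + (1/2)^j) = real N + 1" using p by (simp add: N power_one_over ring_distribs)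
  finally have u: "2^j * x < real N + 1" .
  have "real N = 2^j * P n" using p N by simp
  hence l: "real N < 2^j * x" using t(1) p by simp
  have "\<lfloor>2^j * x\<rfloor> = int N" using u l by (simp add: floor_eq_iff)
  hence "K j = N" unfolding K_def by simp
  thus ?thesis using N p by simp
qed

lemma n_exists: "\<exists>n. A n \<le> j \<and> j < A (Suc n)"
proof (induction j)
  case 0 show ?case using A_mono[of 0] by (auto simp: A_0 intro!: exI[of _ 0])
next
  case (Suc j)
  then obtain n where n: "A n \<le> j" "j < A (Suc n)" by blast
  show ?case
  proof (cases "Suc j < A (Suc n)")
    case True thus ?thesis using n by (intro exI[of _ n]) auto
  next
    case False thus ?thesis using n A_mono[of "Suc n"] by (intro exI[of _ "Suc n"]) auto
  qed
qed

lemma s_link: "A n \<le> j \<Longrightarrow> j < A (Suc n) \<Longrightarrow> s j = real j - 2 * real n"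
proof (induction j arbitrary: n)
  case 0
  hence n: "n = 0" using A_ge[of n] by simp
  have "K 0 = 0" using x0 x1 unfolding K_def by (simp add: floor_eq_iff)
  thus ?case by (simp add: s_def sl_def n)
next
  case (Suc j)
  show ?case
  proof (cases "A n \<le> j")
    case True
    have IH: "s j = real j - 2 * real n" using Suc.IH[OF True] Suc.prems by simp
    have "real (K (Suc j)) = 2 * real (K j)"
      using K_link[OF True] K_link[OF Suc.prems] Suc.prems by simp
    hence "real (K (Suc j)) = real (2 * K j)" by simp
    hence "K (Suc j) = 2 * K j" by (simp only: of_nat_eq_iff)
    thus ?thesis using s_Suc(1) IH by simp
  next
    case False
    hence e: "A n = Suc j" using Suc.prems by simp
    then obtain n' where n': "n = Suc n'" using A_0 by (cases n) auto
    have r: "A n' \<le> j" "j < A (Suc n')" using A_mono[of n'] e n' by auto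
    have IH: "s j = real j - 2 * real n'" using Suc.IH[OF r] .
    have Pn: "P n = P n' + (1/2)^Suc j" using e n' by (simp add: P_def A_Suc)
    have "real (K (Suc j)) = 2^Suc j * P n" using K_link[of n "Suc j"] Suc.prems by simp
    also have "\<dots> = 2 * (2^j * P n') + 1" unfolding Pn by (simp add: ring_distribs power_one_over)
    also have "2^j * P n' = real (K j)" using K_link[OF r] by simp
    finally have "real (K (Suc j)) = real (2 * K j + 1)" by simp
    hence "K (Suc j) = 2 * K j + 1" by (simp only: of_nat_eq_iff)
    thus ?thesis using s_Suc(2) IH n' by simp
  qed
qed

lemma s_top_iff: "filterlim s at_top sequentially \<longleftrightarrow> filterlim (\<lambda>n. real (a n) - 2*real n) at_top sequentially"
proof
  assume h: "filterlim s at_top sequentially"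
  show "filterlim (\<lambda>n. real (a n) - 2*real n) at_top sequentially"
    unfolding filterlim_at_top eventually_sequentially
  proof
    fix Z
    obtain N where N: "\<And>j. j \<ge> N \<Longrightarrow> Z \<le> s j" using h unfolding filterlim_at_top eventually_sequentially by blast
    show "\<exists>M. \<forall>n\<ge>M. Z \<le> real (a n) - 2 * real n"
    proof (intro exI[of _ "Suc N"] allI impI)
      fix n assume n: "Suc N \<le> n"
      have "s (A n) = real (A n) - 2 * real n" using s_link[of n "A n"] A_mono[of n] by simp
      moreover have "A n = a n" using n by (simp add: A_def)
      moreover have "N \<le> A n" using A_ge[of n] n by simp
      ultimately show "Z \<le> real (a n) - 2 * real n" using N[of "A n"] by simp
    qed
  qed
next
  assume h: "filterlim (\<lambda>n. real (a n) - 2*real n) at_top sequentially"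
  show "filterlim s at_top sequentially"
    unfolding filterlim_at_top eventually_sequentially
  proof
    fix Z
    obtain N where N: "\<And>n. n \<ge> N \<Longrightarrow> Z \<le> real (a n) - 2 * real n"
      using h unfolding filterlim_at_top eventually_sequentially by blast
    show "\<exists>M. \<forall>j\<ge>M. Z \<le> s j"
    proof (intro exI[of _ "A (Suc N)"] allI impI)
      fix j assume j: "A (Suc N) \<le> j"
      obtain n where n: "A n \<le> j" "j < A (Suc n)" using n_exists by blast
      have "Suc N \<le> n"
      proof (rule ccontr)
        assume "\<not> ?thesis"
        hence "A (Suc n) \<le> A (Suc N)" using A_strict by (simp add: strict_mono_less_eq)
        thus False using n j by simp
      qed
      hence "A n = a n" by (simp add: A_def)
      thus "Z \<le> s j" using s_link[OF n] N[of n] \<open>Suc N \<le> n\<close> n by simp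
    qed
  qed
qed

end


lemma hlt1: "(0::real) < c \<Longrightarrow> a < c*y \<Longrightarrow> a/c < y" by (simp add: field_simps)
lemma hlt2: "(0::real) < c \<Longrightarrow> c*y < b \<Longrightarrow> y < b/c" by (simp add: field_simps)
lemma hle1: "(0::real) < c \<Longrightarrow> a \<le> c*y \<Longrightarrow> a/c \<le> y" by (simp add: field_simps)
lemma hle2: "(0::real) < c \<Longrightarrow> c*y \<le> b \<Longrightarrow> y \<le> b/c" by (simp add: field_simps)
lemma hle3: "(0::real) < c \<Longrightarrow> a/c \<le> y \<Longrightarrow> a \<le> c*y" by (simp add: field_simps)
lemma hle4: "(0::real) < c \<Longrightarrow> y \<le> b/c \<Longrightarrow> c*y \<le> b" by (simp add: field_simps)
lemma hid1: "(0::real) < c \<Longrightarrow> (k+1)/c - y = (1 - (c*y - k))/c" by (simp add: field_simps)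
lemma hid2: "(0::real) < c \<Longrightarrow> (2*k+1+1)/(2*c) = (k+1)/c" by (simp add: field_simps)
lemma hid3: "(0::real) < c \<Longrightarrow> (2*k+1)/(2*c) < (k+1)/c" by (simp add: field_simps)
lemma hid4: "(0::real) < c \<Longrightarrow> (k+1)/c - k/c = 1/c" by (simp add: field_simps)

context tk begin

definition L where "L j = real (K j) / 2^j"
definition R where "R j = (real (K j) + 1) / 2^j"

lemma LR: "L j < x" "x < R j" "R j - x < (1/2)^j" "R j \<le> 1" "0 \<le> L j"
proof -
  have p: "(0::real) < 2^j" by simp
  show l: "L j < x" unfolding L_def using hlt1[OF p K_bounds(1)] .
  show r: "x < R j" unfolding R_def using hlt2[OF p K_bounds(2)] .
  have "R j - L j = 1/2^j" unfolding R_def L_def using hid4[OF p] by simp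
  thus "R j - x < (1/2)^j" using l by (simp add: power_one_over)
  have "K j + 1 \<le> 2^j" using K_bounds(3)[of j] by simp
  hence "real (K j + 1) \<le> real ((2::nat)^j)" by (simp only: of_nat_le_iff)
  hence "real (K j) + 1 \<le> 2^j" by simp
  thus "R j \<le> 1" unfolding R_def using p by simp
  show "0 \<le> L j" unfolding L_def by simp
qed

lemma R_Suc: "R (Suc j) \<le> R j" "R (Suc j) < R j \<Longrightarrow> K (Suc j) = 2*K j"
  "K (Suc j) = 2 * K j \<Longrightarrow> R (Suc j) = (2*real (K j) + 1)/2^Suc j"
  "K (Suc j) = 2 * K j \<Longrightarrow> R (Suc j) < R j"
proof -
  have p: "(0::real) < 2^j" by simp
  have c1: "K (Suc j) = 2 * K j + 1 \<Longrightarrow> R (Suc j) = R j"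
    unfolding R_def using hid2[OF p, of "real (K j)"] by simp
  have c2: "K (Suc j) = 2 * K j \<Longrightarrow> R (Suc j) < R j"
    unfolding R_def using hid3[OF p, of "real (K j)"] by simp
  show "R (Suc j) \<le> R j" using c1 c2 K_Suc[of j] by force
  show "R (Suc j) < R j \<Longrightarrow> K (Suc j) = 2*K j" using c1 K_Suc[of j] by force
  show "K (Suc j) = 2 * K j \<Longrightarrow> R (Suc j) = (2*real (K j) + 1)/2^Suc j" unfolding R_def by simp
  show "K (Suc j) = 2 * K j \<Longrightarrow> R (Suc j) < R j" by (rule c2)
qed

lemma R_anti: "i \<le> j \<Longrightarrow> R j \<le> R i"
proof (induction j rule: dec_induct)
  case (step n) thus ?case using R_Suc(1)[of n] by simp
qed simp

lemma x_form: "takagi x = takagi (L j) + s j * (x - L j) + takagi (2^j*x - K j)/2^j"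
  using selfsim[OF K_bounds(3), where y = x] LR(1,2)[of j] unfolding L_def R_def s_def by simp

lemma R_formula: "takagi (R j) - takagi x = s j * (R j - x) - takagi (2^j*x - K j)/2^j"
proof -
  have p: "(0::real) < 2^j" by simp
  have TR: "takagi (R j) = takagi (L j) + s j / 2^j" unfolding s_def sl_def R_def L_def using p by simp
  have "R j = L j + 1/2^j" unfolding R_def L_def by (simp add: add_divide_distrib)
  hence "s j / 2^j - s j * (x - L j) = s j * (R j - x)" by (simp add: algebra_simps)
  thus ?thesis using TR x_form[of j] by simp
qed

lemma v_bounds: "0 < 2^j*x - K j" "2^j*x - K j < 1" "R j - x = (1 - (2^j*x - K j))/2^j"
   "K (Suc j) = 2 * K j \<Longrightarrow> 2^j*x - K j < 1/2"
proof -
  have p: "(0::real) < 2^j" by simp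
  show "0 < 2^j*x - K j" "2^j*x - K j < 1" using K_bounds[of j] by simp_all
  show "R j - x = (1 - (2^j*x - K j))/2^j" unfolding R_def by (rule hid1[OF p])
  assume "K (Suc j) = 2 * K j"
  hence "2 * (2^j*x) < 2 * real (K j) + 1" using K_bounds(2)[of "Suc j"] by (simp add: mult.assoc)
  thus "2^j*x - K j < 1/2" by simp
qed

lemma G: assumes "K (Suc j) = 2 * K j" shows "(s j - 2) * (R j - x) \<le> takagi (R j) - takagi x"
proof -
  define v where "v = 2^j*x - K j"
  have v: "0 < v" "v < 1/2" using v_bounds(1) v_bounds(4)[OF assms] by (simp_all add: v_def)
  have "takagi v \<le> 2 * (1 - v)" using takagi_le1[of v] v by simp
  hence "takagi v / 2^j \<le> 2 * ((1 - v)/2^j)" by (simp add: divide_right_mono)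
  also have "(1 - v)/2^j = R j - x" using v_bounds(3) by (simp add: v_def)
  finally have "takagi v / 2^j \<le> 2 * (R j - x)" .
  thus ?thesis using R_formula[of j] unfolding v_def by (simp add: algebra_simps)
qed

lemma right_half: assumes "K (Suc j) = 2 * K j" "R (Suc j) \<le> y" "y \<le> R j"
  shows "(s j - 1) * (y - R (Suc j)) \<le> takagi y - takagi (R (Suc j))"
proof -
  have p: "(0::real) < 2^Suc j" by simp
  have k: "2 * K j + 1 < 2^Suc j" using K_bounds(3)[of j] by simp
  have e1: "real (2 * K j + 1) / 2^Suc j = R (Suc j)" using R_Suc(3)[OF assms(1)] by simp
  have e2: "(real (2 * K j + 1) + 1) / 2^Suc j = R j"
    unfolding R_def using hid2[of "2^j" "real (K j)"] by simp
  have sl: "sl (Suc j) (2 * K j + 1) = s j - 1" unfolding s_def using sl_children(2)[OF K_bounds(3)] .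
  have y1: "real (2 * K j + 1) / 2^Suc j \<le> y" "y \<le> (real (2 * K j + 1) + 1) / 2^Suc j"
    using assms e1 e2 by simp_all
  have "real (2 * K j + 1) \<le> 2^Suc j * y" using hle3[OF p y1(1)] .
  moreover have "2^Suc j * y \<le> real (2 * K j + 1) + 1" using hle4[OF p y1(2)] .
  ultimately have "0 \<le> takagi (2^Suc j * y - real (2 * K j + 1))"
    by (intro takagi_nonneg) simp_all
  hence "0 \<le> takagi (2^Suc j * y - real (2 * K j + 1)) / 2^Suc j" by simp
  thus ?thesis using selfsim[OF k y1] unfolding e1 sl by simp
qed

end


lemma hq1: "(0::real) < h \<Longrightarrow> Z*h < d \<Longrightarrow> Z < d/h" by (simp add: field_simps)
lemma hq2: "(0::real) < h \<Longrightarrow> d \<le> S*h \<Longrightarrow> d/h \<le> S" by (simp add: field_simps)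

lemma pow_small: "(0::real) < b \<Longrightarrow> \<exists>J. (1/2::real)^J < b"
  using real_arch_pow_inv[of b "1/2"] by auto

context tk begin

lemma exists_R_below: assumes "x < y" shows "\<exists>i. R i < y"
proof -
  obtain i where i: "(1/2::real)^i < y - x" using pow_small[of "y - x"] assms by auto
  thus ?thesis using LR(3)[of i] by (intro exI[of _ i]) simp
qed

lemma right_imp: assumes "filterlim (\<lambda>h. (takagi (x + h) - takagi x) / h) at_top (at_right 0)"
  shows "filterlim s at_top sequentially"
  unfolding filterlim_at_top eventually_sequentially
proof
  fix Z
  from assms have "eventually (\<lambda>h. Z < (takagi (x + h) - takagi x) / h) (at_right 0)"
    unfolding filterlim_at_top_dense by blast
  then obtain b where b: "b > 0" "\<And>h. h > 0 \<Longrightarrow> h < b \<Longrightarrow> Z < (takagi (x + h) - takagi x) / h"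
    unfolding eventually_at_right_field by auto
  obtain J where J: "(1/2::real)^J < b" using pow_small[OF b(1)] by blast
  show "\<exists>N. \<forall>j\<ge>N. Z \<le> s j"
  proof (intro exI[of _ J] allI impI)
    fix j assume j: "J \<le> j"
    define h where "h = R j - x"
    have h0: "0 < h" using LR(2)[of j] by (simp add: h_def)
    have "(1/2::real)^j \<le> (1/2)^J" using j by (intro power_decreasing) auto
    hence hb: "h < b" using LR(3)[of j] J unfolding h_def by linarith
    have xh: "x + h = R j" by (simp add: h_def)
    have "0 \<le> takagi (2^j*x - K j)" using v_bounds(1,2)[of j] by (intro takagi_nonneg) auto
    hence "takagi (R j) - takagi x \<le> s j * h" using R_formula[of j] by (simp add: h_def)
    hence "(takagi (x + h) - takagi x) / h \<le> s j" unfolding xh by (intro hq2[OF h0]) (simp add: mult.commute)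
    thus "Z \<le> s j" using b(2)[OF h0 hb] by simp
  qed
qed

lemma right_if: assumes "filterlim s at_top sequentially"
  shows "filterlim (\<lambda>h. (takagi (x + h) - takagi x) / h) at_top (at_right 0)"
  unfolding filterlim_at_top_dense eventually_at_right_field
proof
  fix Z
  obtain J where J: "\<And>j. j \<ge> J \<Longrightarrow> Z + 3 \<le> s j"
    using assms unfolding filterlim_at_top eventually_sequentially by blast
  show "\<exists>b>0. \<forall>h>0. h < b \<longrightarrow> Z < (takagi (x + h) - takagi x) / h"
  proof (intro exI[of _ "R J - x"] conjI allI impI)
    show "0 < R J - x" using LR(2)[of J] by simp
    fix h :: real assume h0: "0 < h" and hb: "h < R J - x"
    define y where "y = x + h"
    have xy: "x < y" "y < R J" using h0 hb by (simp_all add: y_def)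
    define j0 where "j0 = (LEAST i. R i < y)"
    have j0: "R j0 < y" unfolding j0_def by (rule LeastI_ex[OF exists_R_below[OF xy(1)]])
    have Jj0: "J < j0"
    proof (rule ccontr)
      assume "\<not> J < j0"
      hence "R J \<le> R j0" by (intro R_anti) simp
      thus False using j0 xy by simp
    qed
    define j where "j = j0 - 1"
    have jj: "j0 = Suc j" "J \<le> j" using Jj0 by (simp_all add: j_def)
    have Rj: "y \<le> R j" using not_less_Least[of j "\<lambda>i. R i < y"] jj unfolding j0_def by force
    have RSj: "R (Suc j) < y" using j0 jj by simp
    hence Kj: "K (Suc j) = 2 * K j" using Rj by (intro R_Suc(2)) simp
    define M where "M = R (Suc j)"
    have xM: "x < M" using LR(2) by (simp add: M_def)
    define j1 where "j1 = (LEAST i. R i < M)"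
    have j1: "R j1 < M" unfolding j1_def by (rule LeastI_ex[OF exists_R_below[OF xM]])
    have j1j: "Suc j < j1"
    proof (rule ccontr)
      assume "\<not> Suc j < j1"
      hence "R (Suc j) \<le> R j1" by (intro R_anti) simp
      thus False using j1 by (simp add: M_def)
    qed
    define j2 where "j2 = j1 - 1"
    have jj2: "j1 = Suc j2" "Suc j \<le> j2" using j1j by (simp_all add: j2_def)
    have Rj2a: "M \<le> R j2" using not_less_Least[of j2 "\<lambda>i. R i < M"] jj2 unfolding j1_def by force
    have Rj2b: "R j2 \<le> M" unfolding M_def using jj2 by (intro R_anti) simp
    have Rj2: "R j2 = M" using Rj2a Rj2b by simp
    have Kj2: "K (Suc j2) = 2 * K j2" using j1 jj2 Rj2 by (intro R_Suc(2)) simp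
    have G2: "(s j2 - 2) * (M - x) \<le> takagi M - takagi x" using G[OF Kj2] Rj2 by simp
    have H: "(s j - 1) * (y - M) \<le> takagi y - takagi M" using right_half[OF Kj _ Rj] RSj by (simp add: M_def)
    have s1: "Z + 1 \<le> s j - 1" using J[of j] jj by simp
    have s2: "Z + 1 \<le> s j2 - 2" using J[of j2] jj jj2 by simp
    have "(Z + 1) * (y - M) \<le> (s j - 1) * (y - M)" using s1 RSj by (intro mult_right_mono) (simp_all add: M_def)
    moreover have "(Z + 1) * (M - x) \<le> (s j2 - 2) * (M - x)" using s2 xM by (intro mult_right_mono) simp_all
    ultimately have "(Z + 1) * (y - x) \<le> takagi y - takagi x" using G2 H by (simp add: algebra_simps)
    moreover have "Z * h < (Z + 1) * (y - x)" using h0 by (simp add: y_def algebra_simps)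
    ultimately have "Z * h < takagi (x + h) - takagi x" by (simp add: y_def)
    thus "Z < (takagi (x + h) - takagi x) / h" by (rule hq1[OF h0])
  qed
qed

end


lemma two_r: "r \<ge> 1 \<Longrightarrow> 2 * r \<le> (2::nat)^r"
proof (induction r rule: dec_induct)
  case (step n) thus ?case by simp
qed simp

lemma half_pow_exists: assumes "0 < t" "t \<le> 1" shows "\<exists>k. (1/2::real)^Suc k < t \<and> t \<le> (1/2)^k"
proof -
  obtain n where n: "(1/2::real)^n < t" using pow_small[OF assms(1)] by blast
  define k0 where "k0 = (LEAST k. (1/2::real)^k < t)"
  have k0: "(1/2::real)^k0 < t" unfolding k0_def by (rule LeastI[of _ n]) (rule n)
  have "k0 \<noteq> 0"
  proof
    assume "k0 = 0" thus False using k0 assms by simp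
  qed
  then obtain k where k: "k0 = Suc k" by (cases k0) auto
  have "\<not> (1/2::real)^k < t" using not_less_Least[of k "\<lambda>k. (1/2::real)^k < t"] k unfolding k0_def by simp
  thus ?thesis using k0 k by (intro exI[of _ k]) auto
qed

lemma g_lower:
  fixes d l :: nat and u t :: real
  assumes d: "1 \<le> d" and l: "2^l \<le> d" and u: "(1/2)^d \<le> u" "u \<le> 2*(1/2)^d" and t: "0 < t" "t \<le> 1"
  shows "- (real d - real l) \<le> (2*t + takagi u - takagi t)/(u + t)"
proof -
  have lt: "l < d" using l less_le_trans[OF less_exp[of l]] by blast
  have u0: "0 < u" using u(1) by (smt (verit) zero_less_power zero_less_divide_1_iff)
  obtain k where k: "(1/2::real)^Suc k < t" "t \<le> (1/2)^k" using half_pow_exists[OF t] by blast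
  have Tt: "takagi t \<le> k*t + 2*t"
  proof -
    have "takagi t \<le> k*t + (1/2)^k" using takagi_small_bounds(2)[OF _ k(2)] t by simp
    moreover have "(1/2::real)^k = 2 * (1/2)^Suc k" by simp
    ultimately show ?thesis using k(1) by linarith
  qed
  have Tu: "(real d - 1) * u \<le> takagi u"
  proof -
    have "(1/2::real)^(d-1) = 2*(1/2)^d" using d by (cases d) auto
    hence "u \<le> (1/2)^(d-1)" using u(2) by simp
    from takagi_small_bounds(1)[OF _ this] u0 show ?thesis using d by (simp add: of_nat_diff)
  qed
  have key: "- (real d - real l) * (u + t) \<le> 2*t + takagi u - takagi t"
  proof (cases "k \<le> d - l")
    case True
    hence "real k \<le> real d - real l" using lt by linarith
    hence "real k * t \<le> (real d - real l) * t" using t by (intro mult_right_mono) auto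
    moreover have "0 \<le> (2*real d - 1 - real l) * u" using u0 lt by simp
    ultimately show ?thesis using Tt Tu by (simp add: algebra_simps)
  next
    case False
    define r where "r = k - (d - l)"
    have r1: "1 \<le> r" and kr: "k = (d - l) + r" using False by (simp_all add: r_def)
    have "(1/2::real)^k = (1/2)^(d-l) * (1/2)^r" using kr by (simp add: power_add)
    moreover have "(1/2::real)^(d-l) = 2^l * (1/2)^d" using lt by (simp add: power_diff power_one_over)
    moreover have "(2::real)^l * (1/2)^d \<le> real d * u"
    proof -
      have "(2::real)^l \<le> real d" using l by (metis of_nat_le_iff of_nat_numeral of_nat_power)
      thus ?thesis using u(1) by (intro mult_mono) auto
    qed
    ultimately have tk: "t \<le> real d * u * (1/2)^r" using k(2) by (smt (verit) mult_right_mono zero_le_power zero_le_divide_1_iff)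
    have "real r * t \<le> real r * (real d * u * (1/2)^r)" using tk by (intro mult_left_mono) auto
    also have "\<dots> = real d * u * (real r * (1/2)^r)" by (simp add: algebra_simps)
    also have "real r * (1/2::real)^r \<le> 1/2"
    proof -
      have "real (2*r) \<le> real ((2::nat)^r)" using two_r[OF r1] by (simp only: of_nat_le_iff)
      hence "2 * real r \<le> 2^r" by simp
      thus ?thesis by (simp add: power_one_over field_simps)
    qed
    hence "real d * u * (real r * (1/2)^r) \<le> real d * u * (1/2)" using u0 by (intro mult_left_mono) auto
    finally have rt: "real r * t \<le> real d * u / 2" by simp
    have "real d / 2 \<le> 2*real d - 1 - real l" using lt by linarith
    hence "real d / 2 * u \<le> (2*real d - 1 - real l) * u" using u0 by (intro mult_right_mono) auto
    hence "real d * u / 2 \<le> (2*real d - 1 - real l) * u" by simp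
    hence rt2: "real r * t \<le> (2*real d - 1 - real l) * u" using rt by linarith
    have kk: "real k = real d - real l + real r" using kr lt by simp
    show ?thesis using Tt Tu rt2 unfolding kk by (simp add: algebra_simps)
  qed
  have "0 < u + t" using u0 t by simp
  thus ?thesis using key by (simp add: pos_le_divide_eq)
qed



lemma g_upper:
  fixes d l :: nat and u :: real
  assumes d: "1 \<le> d" and l: "2^l \<le> d" "d < 2^Suc l" and u: "(1/2)^d \<le> u" "u \<le> 2*(1/2)^d"
  shows "0 < (1/2::real)^(d-l)" "(1/2::real)^(d-l) \<le> 1"
    "(2*(1/2)^(d-l) + takagi u - takagi ((1/2)^(d-l)))/(u + (1/2)^(d-l)) \<le> - (real d - real l) + 14"
proof -
  define t :: real where "t = (1/2)^(d-l)"
  define p where "p = d - l"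
  have lt: "l < d" using l less_le_trans[OF less_exp[of l]] by blast
  have u0: "0 < u" using u(1) by (smt (verit) zero_less_power zero_less_divide_1_iff)
  show "0 < (1/2::real)^(d-l)" "(1/2::real)^(d-l) \<le> 1" by (simp_all add: power_le_one)
  have t0: "0 < t" by (simp add: t_def)
  have Tt: "takagi t = real p * t"
  proof -
    have "takagi t = p*t + takagi(2^p*t)/2^p" using takagi_small[of t p] by (simp add: t_def p_def)
    moreover have "(2::real)^p * t = 1" by (simp add: t_def p_def power_one_over)
    ultimately show ?thesis by simp
  qed
  have Tu: "takagi u \<le> (real d + 1) * u"
  proof -
    have e: "(1/2::real)^(d-1) = 2*(1/2)^d" using d by (cases d) auto
    hence "u \<le> (1/2)^(d-1)" using u(2) by simp
    from takagi_small_bounds(2)[OF _ this] u0 have "takagi u \<le> real (d-1) * u + 2*(1/2)^d" using e by simp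
    thus ?thesis using u(1) d by (simp add: of_nat_diff algebra_simps)
  qed
  have pd: "real p \<le> real d" by (simp add: p_def)
  have c1: "(real d + 1 + real p - 14) * u \<le> (2 * real d + 1) * u"
    using pd u0 by (intro mult_right_mono) auto
  have c2: "(2 * real d + 1) * u \<le> (2 * real d + 1) * (2*(1/2)^d)"
    using u(2) by (intro mult_left_mono) auto
  have "d + 1 \<le> 2 * 2^l" using l(2) by simp
  hence "real (d + 1) \<le> real (2 * 2^l)" by (simp only: of_nat_le_iff)
  hence "real d + 1 \<le> 2 * 2^l" by simp
  hence "(real d + 1) * (1/2)^d \<le> (2 * 2^l) * (1/2::real)^d" by (intro mult_right_mono) auto
  moreover have "t = 2^l * (1/2)^d" unfolding t_def using lt by (simp add: power_diff power_one_over)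
  ultimately have c3: "(real d + 1) * (1/2)^d \<le> 2 * t" by simp
  have "(2 * real d + 1) * (2*(1/2::real)^d) \<le> 12 * t"
  proof -
    have "(2 * real d + 1) * (2*(1/2::real)^d) \<le> 6 * ((real d + 1) * (1/2)^d)"
      by (simp add: algebra_simps)
    thus ?thesis using c3 by linarith
  qed
  hence key: "(real d + 1 + real p - 14) * u \<le> 12 * t" using c1 c2 by linarith
  have "2*t + takagi u - takagi t \<le> (- (real d - real l) + 14) * (u + t)"
  proof -
    have pl: "real p = real d - real l" using lt by (simp add: p_def of_nat_diff)
    have "2*t + takagi u - takagi t \<le> 2*t + (real d + 1) * u - real p * t" using Tu Tt by simp
    also have "\<dots> \<le> (- real p + 14) * (u + t)" using key by (simp add: algebra_simps)
    finally show ?thesis unfolding pl .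
  qed
  thus "(2*(1/2)^(d-l) + takagi u - takagi ((1/2)^(d-l)))/(u + (1/2)^(d-l)) \<le> - (real d - real l) + 14"
    using u0 t0 unfolding t_def[symmetric] by (simp add: pos_divide_le_eq)
qed



lemma solve_d: "(0::real) < c \<Longrightarrow> c*(a - b) = e \<Longrightarrow> a = b + e/c" by (simp add: field_simps)

context tk begin

lemma P_Suc: "P (Suc m) = P m + (1/2)^A(Suc m)" by (simp add: P_def A_Suc)

lemma P_mono: "i \<le> j \<Longrightarrow> P i \<le> P j"
proof (induction j rule: dec_induct)
  case (step n)
  have "0 \<le> (1/2::real)^A(Suc n)" by simp
  thus ?case using step P_Suc[of n] by linarith
qed simp

lemma P_nonneg: "0 \<le> P m" using P_mono[of 0 m] by (simp add: P_def)

lemma u_bounds: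
  fixes m
  defines "d \<equiv> A (Suc (Suc m)) - A (Suc m)"
  shows "(1/2)^d \<le> 2^A(Suc m) * (x - P(Suc m))" "2^A(Suc m) * (x - P(Suc m)) \<le> 2*(1/2)^d"
proof -
  have le: "A (Suc m) \<le> A (Suc (Suc m))" using A_mono[of "Suc m"] by simp
  have e: "(2::real)^A(Suc m) * (1/2)^A(Suc (Suc m)) = (1/2)^d"
    unfolding d_def using le by (simp add: power_diff power_one_over)
  have p: "(0::real) < 2^A(Suc m)" by simp
  show "(1/2)^d \<le> 2^A(Suc m) * (x - P(Suc m))"
    using mult_left_mono[OF tail_ge[of "Suc m"], of "2^A(Suc m)"] e by simp
  show "2^A(Suc m) * (x - P(Suc m)) \<le> 2*(1/2)^d"
    using mult_left_mono[OF tail_le[of "Suc m"], of "2^A(Suc m)"] e by (simp add: algebra_simps)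
qed

lemma left_formula:
  fixes m y
  defines "c \<equiv> (2::real)^A (Suc m)"
  defines "u \<equiv> c*(x - P(Suc m))" and "t \<equiv> c*(P(Suc m) - y)"
  assumes y: "P m \<le> y" "y < P(Suc m)"
  shows "(takagi x - takagi y)/(x - y) = s (A (Suc m)) + (2*t + takagi u - takagi t)/(u+t)"
    "0 < t" "t \<le> 1" "x - y = (u + t)/c"
proof -
  define \<alpha> where "\<alpha> = A (Suc m)"
  have c0: "0 < c" by (simp add: c_def)
  have a1: "1 \<le> \<alpha>" using A_ge[of "Suc m"] by (simp add: \<alpha>_def)
  then obtain \<beta> where \<beta>: "\<alpha> = Suc \<beta>" by (cases \<alpha>) auto
  have Ka: "real (K \<alpha>) = c * P (Suc m)" using K_link[of "Suc m" \<alpha>] A_mono[of "Suc m"]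
    by (simp add: \<alpha>_def c_def)
  have Kb: "real (K \<beta>) = 2^\<beta> * P m" using K_link[of m \<beta>] A_mono[of m] \<beta> by (simp add: \<alpha>_def)
  have cP: "c * (P (Suc m) - P m) = 1" using P_Suc[of m] by (simp add: c_def power_one_over)
  have cb: "c = 2 * 2^\<beta>" using \<beta> by (simp add: c_def \<alpha>_def)
  have "real (K \<alpha>) = 2 * real (K \<beta>) + 1" using Ka Kb cP cb by (simp add: algebra_simps)
  hence "real (K \<alpha>) = real (2 * K \<beta> + 1)" by simp
  hence KK: "K (Suc \<beta>) = 2 * K \<beta> + 1" using \<beta> by (simp only: of_nat_eq_iff)
  define k0 where "k0 = 2 * K \<beta>"
  have k0: "k0 < 2^\<alpha>" using K_bounds(3)[of \<beta>] \<beta> by (simp add: k0_def)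
  have slk: "sl \<alpha> k0 = s \<alpha> + 2"
    using sl_children[OF K_bounds(3)[of \<beta>]] s_Suc(2)[OF KK] \<beta> unfolding k0_def s_def by simp
  have k0P: "real k0 / 2^\<alpha> = P m" "(real k0 + 1) / 2^\<alpha> = P (Suc m)"
    using Ka Kb cb \<beta> cP KK c0 by (simp_all add: k0_def \<alpha>_def c_def[symmetric] field_simps)
  have c\<alpha>: "(2::real)^\<alpha> = c" by (simp add: c_def \<alpha>_def)
  show t0: "0 < t" using y c0 by (simp add: t_def)
  have t1: "c*(y - P m) = 1 - t" using cP by (simp add: t_def algebra_simps)
  show "t \<le> 1" using t1 y c0 by (smt (verit) mult_nonneg_nonneg)
  have ty: "c*y - real k0 = 1 - t" using t1 k0P(1) c0 unfolding c\<alpha> by (simp add: field_simps)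
  have E1: "takagi y = takagi (P m) + (s \<alpha> + 2) * (y - P m) + takagi (1 - t)/c"
    using selfsim[OF k0, where y = y] k0P y ty unfolding slk c\<alpha> by simp
  have E2: "takagi (P (Suc m)) = takagi (P m) + (s \<alpha> + 2) / c"
    using slk k0P c0 unfolding sl_def c\<alpha> by (intro solve_d) simp_all
  have L\<alpha>: "L \<alpha> = P (Suc m)" unfolding L_def using Ka c\<alpha> c0 by simp
  have E3: "takagi x = takagi (P (Suc m)) + s \<alpha> * (x - P (Suc m)) + takagi u / c"
    using x_form[of \<alpha>] unfolding L\<alpha> c\<alpha> Ka u_def by (simp add: right_diff_distrib)
  have sym: "takagi (1 - t) = takagi t" using takagi_sym[of t] t0 \<open>t \<le> 1\<close> by simp
  have xq: "x - P (Suc m) = u / c" using c0 by (simp add: u_def)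
  have yP: "y - P m = (1 - t)/c" using t1 c0 by (simp add: field_simps)
  have E1': "c * takagi y = c * takagi (P m) + (s \<alpha> + 2) * (1 - t) + takagi t"
  proof -
    have "c * takagi y = c * (takagi (P m) + (s \<alpha> + 2) * (y - P m) + takagi (1 - t)/c)" using E1 by simp
    also have "\<dots> = c * takagi (P m) + (s \<alpha> + 2) * (c * (y - P m)) + takagi (1 - t)"
      using c0 by (simp add: distrib_left mult.left_commute)
    finally show ?thesis unfolding t1 sym .
  qed
  have E2': "c * takagi (P (Suc m)) = c * takagi (P m) + (s \<alpha> + 2)"
  proof -
    have "c * ((s \<alpha> + 2) / c) = s \<alpha> + 2" using c0 by simp
    thus ?thesis using E2 by (simp only: distrib_left)
  qed
  have E3': "c * takagi x = c * takagi (P (Suc m)) + s \<alpha> * u + takagi u"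
  proof -
    have "c * takagi x = c * (takagi (P (Suc m)) + s \<alpha> * (x - P (Suc m)) + takagi u / c)" using E3 by simp
    also have "\<dots> = c * takagi (P (Suc m)) + s \<alpha> * (c * (x - P (Suc m))) + takagi u"
      using c0 by (simp add: distrib_left mult.left_commute)
    finally show ?thesis unfolding u_def[symmetric] .
  qed
  have "c * (takagi x - takagi y) = (s \<alpha> + 2) + s \<alpha> * u + takagi u - (s \<alpha> + 2) * (1 - t) - takagi t"
    using E1' E2' E3' by (simp add: right_diff_distrib)
  hence num: "c * (takagi x - takagi y) = s \<alpha> * (u + t) + (2*t + takagi u - takagi t)"
    by (simp add: algebra_simps)
  show xy: "x - y = (u + t)/c" using c0 by (simp add: u_def t_def field_simps)
  have "0 < u" using tail_pos[of "Suc m"] c0 by (simp add: u_def)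
  hence ut: "0 < u + t" using t0 by simp
  have "(takagi x - takagi y)/(x - y) = (c * (takagi x - takagi y)) / (u + t)"
    unfolding xy using c0 by simp
  also have "\<dots> = s \<alpha> + (2*t + takagi u - takagi t)/(u+t)" unfolding num using ut
    by (simp add: add_divide_distrib)
  finally show "(takagi x - takagi y)/(x - y) = s (A (Suc m)) + (2*t + takagi u - takagi t)/(u+t)"
    by (simp add: \<alpha>_def)
qed

end


lemma floor_log_ex: "1 \<le> d \<Longrightarrow> \<exists>l. 2^l \<le> d \<and> d < (2::nat)^Suc l"
proof (induction d rule: dec_induct)
  case base show ?case by (intro exI[of _ 0]) simp
next
  case (step d)
  then obtain l where l: "2^l \<le> d" "d < (2::nat)^Suc l" by blast
  show ?case
  proof (cases "Suc d < 2^Suc l")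
    case True thus ?thesis using l by (intro exI[of _ l]) auto
  next
    case False
    hence "Suc d = 2^Suc l" using l by simp
    thus ?thesis by (intro exI[of _ "Suc l"]) simp
  qed
qed

lemma log_bounds: assumes "2^l \<le> d" "d < (2::nat)^Suc l"
  shows "real l \<le> log 2 (real d)" "log 2 (real d) < real l + 1"
proof -
  have "real ((2::nat)^l) \<le> real d" using assms(1) by (simp only: of_nat_le_iff)
  hence "(2::real)^l \<le> real d" by simp
  thus "real l \<le> log 2 (real d)" by (intro le_log_of_power) auto
  have "d > 0" using assms(1) by (metis le_zero_eq not_gr_zero power_not_zero zero_neq_numeral)
  have "real d < real ((2::nat)^Suc l)" using assms(2) by (simp only: of_nat_less_iff)
  hence "real d < 2^Suc l" by simp
  hence "log 2 (real d) < real (Suc l)" using \<open>d > 0\<close> by (intro log_of_power_less) auto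
  thus "log 2 (real d) < real l + 1" by simp
qed

context tk begin

definition cseq where "cseq n = real (a (Suc n)) - 2 * real (a n) + 2 * real n
                 - log 2 (real (a (Suc n)) - real (a n))"

lemma cseq_Suc: "cseq (Suc m) = real (A (Suc (Suc m))) - 2 * real (A (Suc m)) + 2 * real (Suc m)
     - log 2 (real (A (Suc (Suc m)) - A (Suc m)))"
  using A_mono[of "Suc m"] unfolding cseq_def by (simp add: A_Suc of_nat_diff)

lemma d_facts: fixes m defines "d \<equiv> A (Suc (Suc m)) - A (Suc m)"
  shows "1 \<le> d" "\<exists>l. 2^l \<le> d \<and> d < (2::nat)^Suc l"
  using A_mono[of "Suc m"] floor_log_ex[of d] by (auto simp: d_def)

lemma s_alpha: "s (A (Suc m)) = real (A (Suc m)) - 2 * real (Suc m)"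
  using s_link[of "Suc m" "A (Suc m)"] A_mono[of "Suc m"] by simp

lemma left_lower: assumes "P m \<le> y" "y < P (Suc m)"
  shows "- cseq (Suc m) - 1 \<le> (takagi x - takagi y)/(x - y)"
proof -
  define d where "d = A (Suc (Suc m)) - A (Suc m)"
  obtain l where l: "2^l \<le> d" "d < (2::nat)^Suc l" using d_facts(2)[of m] unfolding d_def by blast
  have d1: "1 \<le> d" using d_facts(1)[of m] unfolding d_def .
  define c :: real where "c = 2^A (Suc m)"
  define u where "u = c*(x - P(Suc m))"
  define t where "t = c*(P(Suc m) - y)"
  note LF = left_formula[OF assms, folded c_def, folded u_def t_def]
  have ub: "(1/2)^d \<le> u" "u \<le> 2*(1/2)^d" using u_bounds[of m] unfolding d_def c_def u_def by simp_all
  have g: "- (real d - real l) \<le> (2*t + takagi u - takagi t)/(u + t)"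
    by (rule g_lower[OF d1 l(1) ub LF(2,3)])
  have lb: "log 2 (real d) < real l + 1" using log_bounds[OF l] by simp
  have dd: "real d = real (A (Suc (Suc m))) - real (A (Suc m))" using A_mono[of "Suc m"] by (simp add: d_def of_nat_diff)
  show ?thesis using LF(1) g lb s_alpha[of m] cseq_Suc[of m] unfolding d_def[symmetric] dd by linarith
qed

lemma left_upper: "\<exists>y. P m \<le> y \<and> y < P (Suc m) \<and> (takagi x - takagi y)/(x - y) \<le> - cseq (Suc m) + 14"
proof -
  define d where "d = A (Suc (Suc m)) - A (Suc m)"
  obtain l where l: "2^l \<le> d" "d < (2::nat)^Suc l" using d_facts(2)[of m] unfolding d_def by blast
  have d1: "1 \<le> d" using d_facts(1)[of m] unfolding d_def .
  define c :: real where "c = 2^A (Suc m)"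
  have c0: "0 < c" by (simp add: c_def)
  define u where "u = c*(x - P(Suc m))"
  define t :: real where "t = (1/2)^(d-l)"
  define y where "y = P (Suc m) - t / c"
  have ub: "(1/2)^d \<le> u" "u \<le> 2*(1/2)^d" using u_bounds[of m] unfolding d_def c_def u_def by simp_all
  note GU = g_upper[OF d1 l ub, folded t_def]
  have cP: "c * (P (Suc m) - P m) = 1" using P_Suc[of m] by (simp add: c_def power_one_over)
  have ty: "c*(P(Suc m) - y) = t" using c0 by (simp add: y_def)
  have y1: "y < P (Suc m)" using GU(1) c0 by (simp add: y_def)
  have "t / c \<le> 1 / c" using GU(2) c0 by (simp add: divide_right_mono)
  also have "1 / c = P (Suc m) - P m" using cP c0 by (simp add: field_simps)
  finally have y0: "P m \<le> y" by (simp add: y_def)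
  note LF = left_formula[OF y0 y1, folded c_def, folded u_def, unfolded ty]
  have lb: "real l \<le> log 2 (real d)" using log_bounds[OF l] by simp
  have dd: "real d = real (A (Suc (Suc m))) - real (A (Suc m))" using A_mono[of "Suc m"] by (simp add: d_def of_nat_diff)
  have "(takagi x - takagi y)/(x - y) \<le> - cseq (Suc m) + 14"
    using LF(1) GU(3) lb s_alpha[of m] cseq_Suc[of m] unfolding d_def[symmetric] dd by linarith
  thus ?thesis using y0 y1 by blast
qed

end


lemma hq3: "(y::real) < x \<Longrightarrow> (takagi (x + (y - x)) - takagi x) / (y - x) = (takagi x - takagi y)/(x - y)"
proof -
  assume "y < x"
  have "(takagi y - takagi x) / (y - x) = (takagi x - takagi y)/(x - y)"
    by (metis minus_diff_eq minus_divide_divide)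
  thus ?thesis by simp
qed

context tk begin

lemma x_minus_P: "x - P m < (1/2)^m"
proof -
  have "(1/2::real)^A(Suc m) \<le> (1/2)^Suc m" using A_ge[of "Suc m"] by (intro power_decreasing) auto
  thus ?thesis using tail_lt[of m] by simp
qed

lemma left_if: assumes "filterlim cseq at_bot sequentially"
  shows "filterlim (\<lambda>h. (takagi (x + h) - takagi x) / h) at_top (at_left 0)"
  unfolding filterlim_at_top_dense eventually_at_left_field
proof
  fix Z
  obtain N where N: "\<And>n. n \<ge> N \<Longrightarrow> cseq n \<le> - (Z + 2)"
    using assms unfolding filterlim_at_bot eventually_sequentially by blast
  show "\<exists>b<0. \<forall>h>b. h < 0 \<longrightarrow> Z < (takagi (x + h) - takagi x) / h"
  proof (intro exI[of _ "P N - x"] conjI allI impI)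
    show "P N - x < 0" using tail_pos[of N] by simp
    fix h :: real assume hb: "P N - x < h" and h0: "h < 0"
    define y where "y = x + h"
    have yx: "y < x" "P N < y" using hb h0 by (simp_all add: y_def)
    have ex: "\<exists>i. y < P (Suc i)"
    proof -
      obtain i where i: "(1/2::real)^i < x - y" using pow_small[of "x - y"] yx by auto
      have "(1/2::real)^Suc i \<le> (1/2)^i" by (intro power_decreasing) auto
      thus ?thesis using x_minus_P[of "Suc i"] i by (intro exI[of _ i]) linarith
    qed
    define m where "m = (LEAST i. y < P (Suc i))"
    have m1: "y < P (Suc m)" unfolding m_def by (rule LeastI_ex[OF ex])
    have m0: "P m \<le> y"
    proof (cases m)
      case 0 thus ?thesis using yx P_nonneg[of N] by (simp add: P_def)
    next
      case (Suc m')
      have "\<not> y < P (Suc m')" using not_less_Least[of m' "\<lambda>i. y < P (Suc i)"] Suc unfolding m_def by simp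
      thus ?thesis using Suc by simp
    qed
    have mN: "N \<le> Suc m"
    proof (rule ccontr)
      assume "\<not> N \<le> Suc m"
      hence "P (Suc m) \<le> P N" by (intro P_mono) simp
      thus False using m1 yx by simp
    qed
    have "- cseq (Suc m) - 1 \<le> (takagi x - takagi y)/(x - y)" by (rule left_lower[OF m0 m1])
    moreover have "Z + 2 \<le> - cseq (Suc m)" using N[OF mN] by simp
    ultimately have "Z < (takagi x - takagi y)/(x - y)" by linarith
    thus "Z < (takagi (x + h) - takagi x) / h" using hq3[OF yx(1)] by (simp add: y_def)
  qed
qed

lemma left_imp: assumes "filterlim (\<lambda>h. (takagi (x + h) - takagi x) / h) at_top (at_left 0)"
  shows "filterlim cseq at_bot sequentially"
  unfolding filterlim_at_bot eventually_sequentially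
proof
  fix W
  from assms have "eventually (\<lambda>h. 14 - W < (takagi (x + h) - takagi x) / h) (at_left 0)"
    unfolding filterlim_at_top_dense by blast
  then obtain b where b: "b < 0" "\<And>h. h > b \<Longrightarrow> h < 0 \<Longrightarrow> 14 - W < (takagi (x + h) - takagi x) / h"
    unfolding eventually_at_left_field by auto
  obtain J where J: "(1/2::real)^J < - b" using pow_small[of "-b"] b(1) by auto
  show "\<exists>N. \<forall>n\<ge>N. cseq n \<le> W"
  proof (intro exI[of _ "Suc J"] allI impI)
    fix n assume n: "Suc J \<le> n"
    then obtain m where m: "n = Suc m" "J \<le> m" by (cases n) auto
    obtain y where y: "P m \<le> y" "y < P (Suc m)" "(takagi x - takagi y)/(x - y) \<le> - cseq (Suc m) + 14"
      using left_upper[of m] by blast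
    have yx: "y < x" using y(2) tail_pos[of "Suc m"] by simp
    have "(1/2::real)^m \<le> (1/2)^J" using m by (intro power_decreasing) auto
    hence "x - y < - b" using x_minus_P[of m] y(1) J by linarith
    hence "14 - W < (takagi (x + (y - x)) - takagi x) / (y - x)" using yx by (intro b(2)) auto
    thus "cseq n \<le> W" using hq3[OF yx] y(3) m by simp
  qed
qed

end


lemma sym_gen1: fixes f g :: "real \<Rightarrow> real"
  assumes "eventually (\<lambda>h. g (-h) = - f h) (at_right 0)"
  shows "filterlim f at_bot (at_right 0) \<longleftrightarrow> filterlim g at_top (at_left 0)"
proof -
  have "filterlim g at_top (at_left 0) \<longleftrightarrow> filterlim (\<lambda>h. g (-h)) at_top (at_right 0)"
    using at_left_minus[of "0::real"] by (simp add: filterlim_filtermap)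
  also have "\<dots> \<longleftrightarrow> filterlim (\<lambda>h. - f h) at_top (at_right 0)" by (rule filterlim_cong[OF refl refl assms])
  also have "\<dots> \<longleftrightarrow> filterlim f at_bot (at_right 0)" by (simp add: filterlim_uminus_at_bot)
  finally show ?thesis by simp
qed

lemma sym_gen2: fixes f g :: "real \<Rightarrow> real"
  assumes "eventually (\<lambda>h. g (-h) = - f h) (at_left 0)"
  shows "filterlim f at_bot (at_left 0) \<longleftrightarrow> filterlim g at_top (at_right 0)"
proof -
  have "filterlim g at_top (at_right 0) \<longleftrightarrow> filterlim (\<lambda>h. g (-h)) at_top (at_left 0)"
    using at_right_minus[of "0::real"] by (simp add: filterlim_filtermap)
  also have "\<dots> \<longleftrightarrow> filterlim (\<lambda>h. - f h) at_top (at_left 0)" by (rule filterlim_cong[OF refl refl assms])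
  also have "\<dots> \<longleftrightarrow> filterlim f at_bot (at_left 0)" by (simp add: filterlim_uminus_at_bot)
  finally show ?thesis by simp
qed

lemma Q_sym: assumes "0 \<le> x + h" "x + h \<le> 1" "0 \<le> x" "x \<le> 1"
  shows "(takagi ((1 - x) + (-h)) - takagi (1 - x)) / (-h) = - ((takagi (x + h) - takagi x) / h)"
proof -
  have e1: "(1 - x) + (-h) = 1 - (x + h)" by simp
  have "takagi ((1 - x) + (-h)) = takagi (x + h)" unfolding e1 by (rule takagi_sym) (use assms in auto)
  moreover have "takagi (1 - x) = takagi x" by (rule takagi_sym) (use assms in auto)
  ultimately show ?thesis by (simp only: divide_minus_right)
qed

lemma nondyadic_sym: "\<not> dyadic x \<Longrightarrow> \<not> dyadic (1 - x)"
proof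
  assume nd: "\<not> dyadic x" and "dyadic (1 - x)"
  then obtain k :: int and m :: nat where e: "1 - x = of_int k / 2^m" unfolding dyadic_def by blast
  have p: "(2::real)^m \<noteq> 0" by simp
  have "x = 1 - of_int k / 2^m" using e by simp
  also have "\<dots> = (2^m - of_int k) / 2^m" using p by (simp add: diff_divide_distrib)
  also have "(2::real)^m - of_int k = of_int (2^m - k)" by simp
  finally have "dyadic x" unfolding dyadic_def by blast
  thus False using nd by simp
qed

theorem theorem1:
  fixes x :: real and a b :: "nat \<Rightarrow> nat"
  assumes x01: "0 < x" "x < 1"
    and nondyadic: "\<not> dyadic x"
    and a_pos: "a 1 \<ge> 1"
    and a_mono: "\<And>n. n \<ge> 1 \<Longrightarrow> a n < a (Suc n)"
    and a_sum: "(\<lambda>n. (1/2) ^ a (Suc n)) sums x"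
    and b_pos: "b 1 \<ge> 1"
    and b_mono: "\<And>n. n \<ge> 1 \<Longrightarrow> b n < b (Suc n)"
    and b_sum: "(\<lambda>n. (1/2) ^ b (Suc n)) sums (1 - x)"
  shows
    "(filterlim (\<lambda>h. (takagi (x + h) - takagi x) / h) at_top (at_right 0)
        \<longleftrightarrow> filterlim (\<lambda>n. real (a n) - 2 * real n) at_top sequentially)
   \<and> (filterlim (\<lambda>h. (takagi (x + h) - takagi x) / h) at_top (at_left 0)
        \<longleftrightarrow> filterlim (\<lambda>n. real (a (Suc n)) - 2 * real (a n) + 2 * real n
                 - log 2 (real (a (Suc n)) - real (a n))) at_bot sequentially)
   \<and> (filterlim (\<lambda>h. (takagi (x + h) - takagi x) / h) at_bot (at_right 0)
        \<longleftrightarrow> filterlim (\<lambda>n. real (b (Suc n)) - 2 * real (b n) + 2 * real n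
                 - log 2 (real (b (Suc n)) - real (b n))) at_bot sequentially)
   \<and> (filterlim (\<lambda>h. (takagi (x + h) - takagi x) / h) at_bot (at_left 0)
        \<longleftrightarrow> filterlim (\<lambda>n. real (b n) - 2 * real n) at_top sequentially)"
proof -
  interpret ta: tk x a using x01 nondyadic a_pos a_mono a_sum by unfold_locales auto
  interpret tb: tk "1 - x" b using x01 nondyadic_sym[OF nondyadic] b_pos b_mono b_sum by unfold_locales auto
  define Q where "Q = (\<lambda>h. (takagi (x + h) - takagi x) / h)"
  define Q' where "Q' = (\<lambda>h. (takagi ((1 - x) + h) - takagi (1 - x)) / h)"
  have ca: "ta.cseq = (\<lambda>n. real (a (Suc n)) - 2 * real (a n) + 2 * real n
                 - log 2 (real (a (Suc n)) - real (a n)))" by (rule ext) (simp add: ta.cseq_def)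
  have cb: "tb.cseq = (\<lambda>n. real (b (Suc n)) - 2 * real (b n) + 2 * real n
                 - log 2 (real (b (Suc n)) - real (b n)))" by (rule ext) (simp add: tb.cseq_def)
  have i1: "filterlim Q at_top (at_right 0) \<longleftrightarrow> filterlim ta.s at_top sequentially"
  proof
    assume "filterlim Q at_top (at_right 0)" thus "filterlim ta.s at_top sequentially"
      unfolding Q_def by (rule ta.right_imp)
  next
    assume "filterlim ta.s at_top sequentially" thus "filterlim Q at_top (at_right 0)"
      unfolding Q_def by (rule ta.right_if)
  qed
  have ii: "filterlim Q at_top (at_left 0) \<longleftrightarrow> filterlim ta.cseq at_bot sequentially"
  proof
    assume "filterlim Q at_top (at_left 0)" thus "filterlim ta.cseq at_bot sequentially"
      unfolding Q_def by (rule ta.left_imp)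
  next
    assume "filterlim ta.cseq at_bot sequentially" thus "filterlim Q at_top (at_left 0)"
      unfolding Q_def by (rule ta.left_if)
  qed
  have ev1: "eventually (\<lambda>h. Q' (-h) = - Q h) (at_right 0)"
    unfolding eventually_at_right_field
  proof (intro exI[of _ "1 - x"] conjI allI impI)
    show "0 < 1 - x" using x01 by simp
    fix h :: real assume h: "0 < h" "h < 1 - x"
    show "Q' (-h) = - Q h" unfolding Q_def Q'_def
      by (rule Q_sym) (use h x01 in linarith)+
  qed
  have ev2: "eventually (\<lambda>h. Q' (-h) = - Q h) (at_left 0)"
    unfolding eventually_at_left_field
  proof (intro exI[of _ "- x"] conjI allI impI)
    show "- x < 0" using x01 by simp
    fix h :: real assume h: "- x < h" "h < 0"
    show "Q' (-h) = - Q h" unfolding Q_def Q'_def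
      by (rule Q_sym) (use h x01 in linarith)+
  qed
  have iii1: "filterlim Q' at_top (at_left 0) \<longleftrightarrow> filterlim tb.cseq at_bot sequentially"
  proof
    assume "filterlim Q' at_top (at_left 0)" thus "filterlim tb.cseq at_bot sequentially"
      unfolding Q'_def by (rule tb.left_imp)
  next
    assume "filterlim tb.cseq at_bot sequentially" thus "filterlim Q' at_top (at_left 0)"
      unfolding Q'_def by (rule tb.left_if)
  qed
  have iv1: "filterlim Q' at_top (at_right 0) \<longleftrightarrow> filterlim tb.s at_top sequentially"
  proof
    assume "filterlim Q' at_top (at_right 0)" thus "filterlim tb.s at_top sequentially"
      unfolding Q'_def by (rule tb.right_imp)
  next
    assume "filterlim tb.s at_top sequentially" thus "filterlim Q' at_top (at_right 0)"
      unfolding Q'_def by (rule tb.right_if)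
  qed
  note i = i1[unfolded ta.s_top_iff]
  note iii = sym_gen1[OF ev1, unfolded iii1]
  note iv = sym_gen2[OF ev2, unfolded iv1 tb.s_top_iff]
  show ?thesis using i ii iii iv unfolding Q_def ca cb by (intro conjI)
qed


end
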